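(* Let $\xi$ be a Hausdorff convergence. Then $\xi$ is symmetrizable if and only if $\xi$ is sequential and $\mathrm{I}_1\xi$ is a semi-metrizable pretopology.
   Context: A convergence $\xi$ on a set $X$ is a relation between filters on $X$ and points, $x\in\lim_\xi\mathcal{F}$, with $\mathcal{F}\le\mathcal{G}\Rightarrow\lim_\xi\mathcal{F}\subset\lim_\xi\mathcal{G}$ and $x\in\lim_\xi\{x\}^\uparrow$; $\xi\ge\theta$ means $\lim_\xi\mathcal{F}\subset\lim_\theta\mathcal{F}$ for all $\mathcal{F}$. Hausdorff: each filter has at most one limit. A set $O$ is $\xi$-open if $\lim_\xi\mathcal{F}\cap O\ne\emptyset\Rightarrow O\in\mathcal{F}$; $\mathrm{T}\xi$ is the topology of $\xi$-open sets. $x\in\lim_{\mathrm{I}_1\xi}\mathcal{F}$ iff there is a countably based filter $\mathcal{H}\le\mathcal{F}$ with $x\in\lim_\xi\mathcal{H}$. $\xi$ is sequential if $\xi\ge\mathrm{T}\mathrm{I}_1\xi$. A semi-metric on $X$ is $d:X\times X\to[0,\infty)$ symmetric with $d(x,y)=0\iff x=y$; $\tilde d$ is the pretopology in which $\mathcal{F}$ converges to $x$ iff $\mathcal{F}$ contains all balls $B(x,\epsilon)=\{y:d(x,y)<\epsilon\}$, $\epsilon>0$. $\xi$ is semi-metrizable if $\xi=\tilde d$ for some semi-metric $d$, and symmetrizable if $\tilde d\ge\xi\ge\mathrm{T}\tilde d$ for some semi-metric $d$ on $X$. *)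

theory Defs
  imports Complex_Main
begin

text \<open>A convergence on the type 'a (the underlying set X is UNIV) is represented by its
limit operator L :: 'a filter => 'a set.  Isabelle's filter order is reversed w.r.t.
the paper: Isabelle F <= G means F is finer (contains more sets).  So the paper's
"F <= G implies L F subset L G" reads "G <= F implies L F subset L G" here.
Filters include the degenerate filter bot; Hausdorffness is required for proper filters.\<close>

definition convergence :: "('a filter \<Rightarrow> 'a set) \<Rightarrow> bool" where
  "convergence L \<longleftrightarrow>
     (\<forall>F G. G \<le> F \<longrightarrow> L F \<subseteq> L G) \<and> (\<forall>x. x \<in> L (principal {x}))"

definition conv_ge :: "('a filter \<Rightarrow> 'a set) \<Rightarrow> ('a filter \<Rightarrow> 'a set) \<Rightarrow> bool" where
  "conv_ge xi theta \<longleftrightarrow> (\<forall>F. xi F \<subseteq> theta F)"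

definition hausdorff_conv :: "('a filter \<Rightarrow> 'a set) \<Rightarrow> bool" where
  "hausdorff_conv L \<longleftrightarrow> (\<forall>F. F \<noteq> bot \<longrightarrow> (\<forall>x y. x \<in> L F \<and> y \<in> L F \<longrightarrow> x = y))"

definition sets_of :: "'a filter \<Rightarrow> 'a set set" where
  "sets_of F = {A. eventually (\<lambda>x. x \<in> A) F}"

definition conv_open :: "('a filter \<Rightarrow> 'a set) \<Rightarrow> 'a set \<Rightarrow> bool" where
  "conv_open L U \<longleftrightarrow> (\<forall>F. L F \<inter> U \<noteq> {} \<longrightarrow> U \<in> sets_of F)"


definition Tconv :: "('a filter \<Rightarrow> 'a set) \<Rightarrow> 'a filter \<Rightarrow> 'a set" where
  "Tconv L F = {x. \<forall>U. conv_open L U \<and> x \<in> U \<longrightarrow> U \<in> sets_of F}"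

definition countably_based :: "'a filter \<Rightarrow> bool" where
  "countably_based H \<longleftrightarrow> (\<exists>B :: nat \<Rightarrow> 'a set.
      \<forall>P. eventually P H \<longleftrightarrow> (\<exists>n. \<forall>x\<in>B n. P x))"

definition I1 :: "('a filter \<Rightarrow> 'a set) \<Rightarrow> 'a filter \<Rightarrow> 'a set" where
  "I1 L F = {x. \<exists>H. countably_based H \<and> F \<le> H \<and> x \<in> L H}"

definition sequential_conv :: "('a filter \<Rightarrow> 'a set) \<Rightarrow> bool" where
  "sequential_conv L \<longleftrightarrow> conv_ge L (Tconv (I1 L))"

text \<open>Pretopology: the vicinity filter (paper's infimum of all filters converging to x,
which is Isabelle's Sup) converges to x.\<close>
definition pretopology :: "('a filter \<Rightarrow> 'a set) \<Rightarrow> bool" where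
  "pretopology L \<longleftrightarrow> (\<forall>x. x \<in> L (Sup {F. x \<in> L F}))"

definition semimetric :: "('a \<Rightarrow> 'a \<Rightarrow> real) \<Rightarrow> bool" where
  "semimetric d \<longleftrightarrow> (\<forall>x y. d x y \<ge> 0 \<and> d x y = d y x \<and> (d x y = 0 \<longleftrightarrow> x = y))"

definition semimetric_conv :: "('a \<Rightarrow> 'a \<Rightarrow> real) \<Rightarrow> 'a filter \<Rightarrow> 'a set" where
  "semimetric_conv d F = {x. \<forall>e>0. {y. d x y < e} \<in> sets_of F}"

definition semi_metrizable :: "('a filter \<Rightarrow> 'a set) \<Rightarrow> bool" where
  "semi_metrizable L \<longleftrightarrow> (\<exists>d. semimetric d \<and> L = semimetric_conv d)"

definition symmetrizable :: "('a filter \<Rightarrow> 'a set) \<Rightarrow> bool" where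
  "symmetrizable L \<longleftrightarrow> (\<exists>d. semimetric d \<and>
     conv_ge (semimetric_conv d) L \<and> conv_ge L (Tconv (semimetric_conv d)))"

end

theory Submission
  imports Defs
begin

definition nbhd :: "('a \<Rightarrow> 'a \<Rightarrow> real) \<Rightarrow> 'a \<Rightarrow> 'a filter" where
  "nbhd d w = (INF e\<in>{0<..}. principal {y. d w y < e})"

lemma nbhd_eventually:
  "eventually P (nbhd d w) \<longleftrightarrow> (\<exists>e>0. \<forall>y. d w y < e \<longrightarrow> P y)"
proof -
  have "eventually P (nbhd d w) \<longleftrightarrow> (\<exists>e\<in>{0<..}. eventually P (principal {y. d w y < (e::real)}))"
    unfolding nbhd_def
  proof (rule eventually_INF_base)
    show "{0::real<..} \<noteq> {}" by auto
    fix a b :: real assume "a \<in> {0<..}" "b \<in> {0<..}"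
    then show "\<exists>x\<in>{0<..}. principal {y. d w y < x} \<le> inf (principal {y. d w y < a}) (principal {y. d w y < b})"
      by (intro bexI[of _ "min a b"]) auto
  qed
  then show ?thesis by (auto simp: eventually_principal)
qed

lemma sc_iff: "x \<in> semimetric_conv d F \<longleftrightarrow> F \<le> nbhd d x"
proof
  assume "x \<in> semimetric_conv d F"
  then have h: "\<And>e. e > 0 \<Longrightarrow> eventually (\<lambda>y. d x y < e) F"
    by (auto simp: semimetric_conv_def sets_of_def)
  show "F \<le> nbhd d x"
  proof (rule filter_leI)
    fix P assume "eventually P (nbhd d x)"
    then obtain e where "e > 0" "\<forall>y. d x y < e \<longrightarrow> P y" by (auto simp: nbhd_eventually)
    then show "eventually P F" using h[of e] by (auto elim: eventually_mono)
  qed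
next
  assume "F \<le> nbhd d x"
  then show "x \<in> semimetric_conv d F"
    unfolding semimetric_conv_def sets_of_def
    by (auto intro!: filter_leD[of F "nbhd d x"] simp: nbhd_eventually)
qed

lemma cb_nbhd: "countably_based (nbhd d x)"
  unfolding countably_based_def
proof (intro exI[of _ "\<lambda>n. {y. d x y < 1 / real (Suc n)}"] allI iffI)
  fix P assume "eventually P (nbhd d x)"
  then obtain e where e: "e > 0" "\<forall>y. d x y < e \<longrightarrow> P y" by (auto simp: nbhd_eventually)
  obtain n where "inverse (real (Suc n)) < e" using e(1) reals_Archimedean by blast
  then show "\<exists>n. \<forall>y\<in>{y. d x y < 1 / real (Suc n)}. P y"
  proof (intro exI[of _ n] ballI)
    fix y assume "y \<in> {y. d x y < 1 / real (Suc n)}"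
    then have "d x y < inverse (real (Suc n))" by (simp add: inverse_eq_divide)
    then have "d x y < e" using \<open>inverse (real (Suc n)) < e\<close> by linarith
    then show "P y" using e(2) by blast
  qed
next
  fix P assume "\<exists>n. \<forall>y\<in>{y. d x y < 1 / real (Suc n)}. P y"
  then obtain n where "\<forall>y\<in>{y. d x y < 1 / real (Suc n)}. P y" by blast
  then show "eventually P (nbhd d x)"
    by (auto simp: nbhd_eventually intro!: exI[of _ "1 / real (Suc n)"])
qed

lemma key_sub:
  assumes conv: "convergence xi" and haus: "hausdorff_conv xi" and sm: "semimetric d"
    and ge1: "conv_ge (semimetric_conv d) xi"
    and ge2: "conv_ge xi (Tconv (semimetric_conv d))"
    and cb: "countably_based H" and xH: "x \<in> xi H"
  shows "H \<le> nbhd d x"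
proof -
  have mono: "\<And>F G. G \<le> F \<Longrightarrow> xi F \<subseteq> xi G" using conv by (auto simp: convergence_def)
  have pos: "\<And>a b. a \<noteq> b \<Longrightarrow> 0 < d a b" using sm unfolding semimetric_def
    by (metis order_le_less)
  have ev: "eventually (\<lambda>y. d x y < e) H" if e: "e > 0" for e
  proof (rule ccontr)
    assume ne: "\<not> eventually (\<lambda>y. d x y < e) H"
    obtain B :: "nat \<Rightarrow> 'a set" where B: "\<And>P. eventually P H \<longleftrightarrow> (\<exists>n. \<forall>x\<in>B n. P x)"
      using cb unfolding countably_based_def by blast
    define C where "C n = \<Inter> (B ` {..n})" for n
    have Bin: "eventually (\<lambda>y. y \<in> B k) H" for k using B by blast
    have Cin: "eventually (\<lambda>y. y \<in> C n) H" for n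
    proof -
      have "eventually (\<lambda>y. \<forall>k\<in>{..n}. y \<in> B k) H"
        by (rule eventually_ball_finite) (auto intro: Bin)
      then show ?thesis by (simp add: C_def)
    qed
    have "\<forall>n. \<exists>y. y \<in> C n \<and> \<not> d x y < e"
    proof
      fix n show "\<exists>y. y \<in> C n \<and> \<not> d x y < e"
      proof (rule ccontr)
        assume "\<nexists>y. y \<in> C n \<and> \<not> d x y < e"
        then have "eventually (\<lambda>y. d x y < e) H" using Cin[of n] by (auto elim: eventually_mono)
        then show False using ne by simp
      qed
    qed
    then obtain y where y: "\<And>n. y n \<in> C n" "\<And>n. \<not> d x (y n) < e" by metis
    define S where "S = filtermap y sequentially"
    have SH: "S \<le> H"
    proof (rule filter_leI)
      fix P assume "eventually P H"
      then obtain n where n: "\<forall>z\<in>B n. P z" using B by blast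
      show "eventually P S" unfolding S_def eventually_filtermap
      proof (rule eventually_sequentiallyI[of n])
        fix m assume "n \<le> m"
        then have "y m \<in> B n" using y(1)[of m] by (auto simp: C_def)
        then show "P (y m)" using n by blast
      qed
    qed
    have xS: "x \<in> xi S" using mono[OF SH] xH by blast
    have xT: "x \<in> Tconv (semimetric_conv d) S" using ge2 xS by (auto simp: conv_ge_def)
    define A where "A = range y"
    have opn: "conv_open (semimetric_conv d) (- A)"
      unfolding conv_open_def
    proof (intro allI impI)
      fix F assume "semimetric_conv d F \<inter> - A \<noteq> {}"
      then obtain w where w: "w \<in> semimetric_conv d F" "w \<notin> A" by blast
      have wpos: "\<And>k. 0 < d w (y k)" using w(2) pos unfolding A_def by blast
      have "\<exists>\<delta>>0. \<forall>n. \<delta> \<le> d w (y n)"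
      proof (rule ccontr)
        assume "\<not> (\<exists>\<delta>>0. \<forall>n. \<delta> \<le> d w (y n))"
        then have small: "\<And>\<delta>. \<delta> > 0 \<Longrightarrow> \<exists>n. d w (y n) < \<delta>" by (meson not_le)
        define G where "G = inf S (nbhd d w)"
        have Gnb: "G \<noteq> bot"
        proof
          assume "G = bot"
          then have "eventually (\<lambda>_. False) G" by simp
          then obtain Q R where QR: "eventually Q S" "eventually R (nbhd d w)" "\<forall>z. Q z \<and> R z \<longrightarrow> False"
            unfolding G_def eventually_inf by blast
          from QR(1) obtain N where N: "\<And>m. m \<ge> N \<Longrightarrow> Q (y m)"
            unfolding S_def eventually_filtermap eventually_sequentially by blast
          from QR(2) obtain \<delta> where dl: "\<delta> > 0" "\<forall>z. d w z < \<delta> \<longrightarrow> R z"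
            by (auto simp: nbhd_eventually)
          define \<delta>' where "\<delta>' = Min (insert \<delta> ((\<lambda>k. d w (y k)) ` {..<N}))"
          have "\<delta>' > 0" unfolding \<delta>'_def using dl(1) wpos by (subst Min_gr_iff) auto
          then obtain m where m: "d w (y m) < \<delta>'" using small by blast
          have "\<delta>' \<le> \<delta>" unfolding \<delta>'_def by (rule Min_le) auto
          have "m \<ge> N"
          proof (rule ccontr)
            assume "\<not> N \<le> m"
            then have "\<delta>' \<le> d w (y m)" unfolding \<delta>'_def by (intro Min_le) auto
            then show False using m by simp
          qed
          then show False using N[of m] dl(2) m \<open>\<delta>' \<le> \<delta>\<close> QR(3) by force
        qed
        have "x \<in> xi G" using mono[of G S] xS by (auto simp: G_def)
        moreover have "w \<in> semimetric_conv d G" unfolding sc_iff G_def by simp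
        then have "w \<in> xi G" using ge1 by (auto simp: conv_ge_def)
        ultimately have "x = w" using haus Gnb unfolding hausdorff_conv_def by blast
        then show False using small[OF e] y(2) by blast
      qed
      then obtain \<delta> where dl: "\<delta> > 0" "\<forall>n. \<delta> \<le> d w (y n)" by blast
      have "eventually (\<lambda>z. d w z < \<delta>) F" using w(1) dl(1)
        by (auto simp: semimetric_conv_def sets_of_def)
      then have "eventually (\<lambda>z. z \<in> - A) F"
      proof (rule eventually_mono)
        fix z assume "d w z < \<delta>"
        have "\<forall>n. z \<noteq> y n"
        proof (intro allI notI)
          fix n assume "z = y n"
          then have "\<delta> \<le> d w z" using dl(2) by simp
          then show False using \<open>d w z < \<delta>\<close> by linarith
        qed
        then show "z \<in> - A" unfolding A_def by blast
      qed
      then show "- A \<in> sets_of F" by (simp add: sets_of_def)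
    qed
    have "x \<notin> A"
    proof
      assume "x \<in> A"
      then obtain n where "x = y n" unfolding A_def by blast
      moreover have "d x x = 0" using sm by (simp add: semimetric_def)
      ultimately show False using y(2)[of n] e by simp
    qed
    moreover have "\<forall>U. conv_open (semimetric_conv d) U \<and> x \<in> U \<longrightarrow> U \<in> sets_of S"
      using xT unfolding Tconv_def by simp
    ultimately have "- A \<in> sets_of S" using opn by blast
    then have "eventually (\<lambda>m. y m \<notin> A) sequentially"
      by (simp add: sets_of_def S_def eventually_filtermap)
    then show False by (simp add: A_def)
  qed
  show ?thesis
  proof (rule filter_leI)
    fix P assume "eventually P (nbhd d x)"
    then obtain e where "e > 0" "\<forall>y. d x y < e \<longrightarrow> P y" by (auto simp: nbhd_eventually)
    then show "eventually P H" using ev[of e] by (auto elim: eventually_mono)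
  qed
qed

lemma I1_ge: "convergence xi \<Longrightarrow> conv_ge (I1 xi) xi"
  unfolding conv_ge_def I1_def convergence_def by blast

theorem corollary3p3:
  fixes xi :: "'a filter \<Rightarrow> 'a set"
  assumes "convergence xi" and "hausdorff_conv xi"
  shows "symmetrizable xi \<longleftrightarrow>
           sequential_conv xi \<and> pretopology (I1 xi) \<and> semi_metrizable (I1 xi)"
proof
  assume "symmetrizable xi"
  then obtain d where sm: "semimetric d" and ge1: "conv_ge (semimetric_conv d) xi"
    and ge2: "conv_ge xi (Tconv (semimetric_conv d))" unfolding symmetrizable_def by blast
  have eq: "I1 xi = semimetric_conv d"
  proof (intro ext set_eqI iffI)
    fix F x assume "x \<in> I1 xi F"
    then obtain H where "countably_based H" "F \<le> H" "x \<in> xi H" by (auto simp: I1_def)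
    then have "H \<le> nbhd d x" using key_sub[OF assms sm ge1 ge2] by blast
    then show "x \<in> semimetric_conv d F" using \<open>F \<le> H\<close> sc_iff by (metis order_trans)
  next
    fix F x assume "x \<in> semimetric_conv d F"
    then have "F \<le> nbhd d x" by (simp add: sc_iff)
    moreover have "x \<in> xi (nbhd d x)" using ge1 sc_iff[of x d "nbhd d x"] by (auto simp: conv_ge_def)
    ultimately show "x \<in> I1 xi F" unfolding I1_def using cb_nbhd[of d x] by (intro CollectI exI[of _ "nbhd d x"] conjI)
  qed
  have "pretopology (I1 xi)"
    unfolding pretopology_def eq sc_iff by (auto intro: Sup_least)
  moreover have "semi_metrizable (I1 xi)" using sm eq by (auto simp: semi_metrizable_def)
  moreover have "sequential_conv xi" using ge2 eq by (simp add: sequential_conv_def)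
  ultimately show "sequential_conv xi \<and> pretopology (I1 xi) \<and> semi_metrizable (I1 xi)" by blast
next
  assume h: "sequential_conv xi \<and> pretopology (I1 xi) \<and> semi_metrizable (I1 xi)"
  then obtain d where "semimetric d" "I1 xi = semimetric_conv d" by (auto simp: semi_metrizable_def)
  then show "symmetrizable xi" using h I1_ge[OF assms(1)]
    by (auto simp: symmetrizable_def sequential_conv_def)
qed

end
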